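(* Let $\mu_0,\mu_1$ be Gaussian measures on $\mathbb{R}$, and let $(X_t)_{t\in[0,1]}$ be a real-valued stochastic process with twice differentiable paths, $X_0\sim\mu_0$, $X_1\sim\mu_1$, such that (1) $X_t$ has a Gaussian distribution for every $t\in[0,1]$, and (2) $\int_0^1\mathbb E[|\ddot X_t|^2]\,dt=0$. Then $(X_0,X_1)$ is jointly Gaussian, i.e. the curve of laws $(\mathrm{law}(X_t))$ is induced by a jointly Gaussian coupling of $\mu_0$ and $\mu_1$. *)

theory Defs
  imports "HOL-Probability.Probability"
begin

definition gaussian_measure :: "real measure \<Rightarrow> bool" where
  "gaussian_measure N \<longleftrightarrow>
     (\<exists>m. N = return borel m) \<or>
     (\<exists>m \<sigma>. \<sigma> > 0 \<and> N = density lborel (normal_density m \<sigma>))"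

definition jointly_gaussian :: "'a measure \<Rightarrow> ('a \<Rightarrow> real) \<Rightarrow> ('a \<Rightarrow> real) \<Rightarrow> bool" where
  "jointly_gaussian M Y Z \<longleftrightarrow>
     (\<forall>a b. gaussian_measure (distr M borel (\<lambda>\<omega>. a * Y \<omega> + b * Z \<omega>)))"

end

theory Submission
  imports Defs "HOL-Computational_Algebra.Polynomial"
begin


definition gmu :: "nat \<Rightarrow> real" where
  "gmu j = (if even j then fact j / (2^(j div 2) * fact (j div 2)) else 0)"

definition GMom :: "nat \<Rightarrow> real \<Rightarrow> real \<Rightarrow> real" where
  "GMom n m v = (\<Sum>j\<le>n. real (n choose j) * m^(n-j) * v^(j div 2) * gmu j)"

definition Gm :: "real \<Rightarrow> real \<Rightarrow> real measure" where
  "Gm m v = (if v = 0 then return borel m else density lborel (normal_density m (sqrt v)))"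

lemma gaussian_Gm: "gaussian_measure N \<Longrightarrow> \<exists>m v. v \<ge> 0 \<and> N = Gm m v"
  unfolding gaussian_measure_def
proof (elim disjE exE conjE)
  fix m assume "N = return borel m"
  then have "N = Gm m 0" by (simp add: Gm_def)
  then show ?thesis by fastforce
next
  fix m \<sigma> :: real assume "\<sigma> > 0" "N = density lborel (normal_density m \<sigma>)"
  then have "N = Gm m (\<sigma>^2)" by (simp add: Gm_def)
  then show ?thesis by (metis zero_le_power2)
qed

lemma Gm_gaussian: "v \<ge> 0 \<Longrightarrow> gaussian_measure (Gm m v)"
proof (cases "v = 0")
  case False
  assume "v \<ge> 0"
  then have "Gm m v = density lborel (normal_density m (sqrt v)) \<and> sqrt v > 0" using False by (simp add: Gm_def)
  then show ?thesis unfolding gaussian_measure_def by blast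
qed (auto simp: gaussian_measure_def Gm_def)

lemma real_distribution_Gm: "v \<ge> 0 \<Longrightarrow> real_distribution (Gm m v)"
  unfolding Gm_def real_distribution_def
  by (auto simp: prob_space_return prob_space_normal_density real_distribution_axioms_def)

lemma GMom_0v: "GMom n m 0 = m ^ n"
proof -
  have "GMom n m 0 = (\<Sum>j\<le>n. if j = 0 then m^n else 0)"
    unfolding GMom_def
  proof (rule sum.cong[OF refl])
    fix j assume "j \<in> {..n}"
    show "real (n choose j) * m ^ (n - j) * 0 ^ (j div 2) * gmu j = (if j = 0 then m ^ n else 0)"
    proof (cases "j = 0")
      case False
      then show ?thesis
      proof (cases "j = 1")
        case True then show ?thesis by (simp add: gmu_def)
      next
        case False
        with \<open>j \<noteq> 0\<close> have "j div 2 \<noteq> 0" by auto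
        then show ?thesis using \<open>j\<noteq>0\<close> by simp
      qed
    qed (simp add: gmu_def)
  qed
  also have "\<dots> = m^n" by simp
  finally show ?thesis .
qed

lemma GMom_1: "GMom 1 m v = m"
  by (simp add: GMom_def gmu_def)

lemma GMom_2: "GMom 2 m v = m^2 + v"
  by (simp add: GMom_def gmu_def numeral_2_eq_2 atMost_Suc)

lemma GMom_scale:
  fixes c m v :: real
  shows "GMom n (c * m) (c^2 * v) = c^n * GMom n m v"
  unfolding GMom_def sum_distrib_left
proof (rule sum.cong[OF refl])
  fix j assume j: "j \<in> {..n}"
  show "real (n choose j) * (c * m) ^ (n - j) * (c\<^sup>2 * v) ^ (j div 2) * gmu j =
         c ^ n * (real (n choose j) * m ^ (n - j) * v ^ (j div 2) * gmu j)"
  proof (cases "even j")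
    case True
    then obtain i where i: "j = 2*i" by blast
    have "c^n = c^(n-j) * (c^2)^i" using j i by (simp add: power_mult[symmetric] power_add[symmetric])
    then show ?thesis using i by (simp add: power_mult_distrib)
  qed (simp add: gmu_def)
qed

lemma Gm_normal_moment:
  assumes s: "\<sigma> > 0"
  shows "has_bochner_integral lborel (\<lambda>x. normal_density m \<sigma> x * (x - m)^j) ((\<sigma>^2)^(j div 2) * gmu j)"
proof (cases "even j")
  case True
  then obtain k where k: "j = 2*k" by blast
  have "fact (2 * k) / ((2 / \<sigma>\<^sup>2)^k * fact k) = (\<sigma>^2)^(j div 2) * gmu j"
    using s k by (simp add: gmu_def power_divide field_simps)
  then show ?thesis using normal_moment_even[OF s, of m k] k by simp
next
  case False
  then obtain k where k: "j = 2*k+1" using oddE by blast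
  then show ?thesis using normal_moment_odd[OF s, of m k] by (simp add: gmu_def)
qed

lemma Gm_moments:
  assumes v: "v \<ge> 0"
  shows "integrable (Gm m v) (\<lambda>x. x^n) \<and> (\<integral>x. x^n \<partial>Gm m v) = GMom n m v"
proof (cases "v = 0")
  case True
  then show ?thesis by (auto simp: Gm_def GMom_0v integrable_iff_bounded nn_integral_return integral_return)
next
  case False
  define \<sigma> where "\<sigma> = sqrt v"
  have s: "\<sigma> > 0" using v False by (simp add: \<sigma>_def)
  have sv: "\<sigma>^2 = v" using v by (simp add: \<sigma>_def)
  have G: "Gm m v = density lborel (normal_density m \<sigma>)" using False by (simp add: Gm_def \<sigma>_def)
  have eq: "(\<lambda>x. normal_density m \<sigma> x * x^n) =
     (\<lambda>x. \<Sum>j\<le>n. real (n choose j) * m^(n-j) * (normal_density m \<sigma> x * (x - m)^j))"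
  proof
    fix x
    have "x^n = ((x - m) + m)^n" by simp
    also have "\<dots> = (\<Sum>j\<le>n. real (n choose j) * (x-m)^j * m^(n-j))" by (rule binomial_ring)
    finally show "normal_density m \<sigma> x * x^n = (\<Sum>j\<le>n. real (n choose j) * m^(n-j) * (normal_density m \<sigma> x * (x - m)^j))"
      by (simp add: sum_distrib_left ac_simps)
  qed
  have hb: "has_bochner_integral lborel (\<lambda>x. normal_density m \<sigma> x * x^n) (GMom n m v)"
    unfolding eq GMom_def
  proof (intro has_bochner_integral_sum)
    fix j assume "j \<in> {..n}"
    show "has_bochner_integral lborel (\<lambda>x. real (n choose j) * m ^ (n - j) * (normal_density m \<sigma> x * (x - m) ^ j))
          (real (n choose j) * m ^ (n - j) * v ^ (j div 2) * gmu j)"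
      using has_bochner_integral_mult_right[OF Gm_normal_moment[OF s, of m j], of "real (n choose j) * m ^ (n - j)"] sv
      by (simp add: ac_simps)
  qed
  have "integrable lborel (\<lambda>x. normal_density m \<sigma> x * x^n)" using hb by (auto intro: integrable.intros)
  then have i: "integrable (Gm m v) (\<lambda>x. x^n)" unfolding G
    by (subst integrable_density) auto
  have "(\<integral>x. x^n \<partial>Gm m v) = (\<integral>x. normal_density m \<sigma> x * x^n \<partial>lborel)"
    unfolding G by (subst integral_density) auto
  also have "\<dots> = GMom n m v" using hb by (rule has_bochner_integral_integral_eq)
  finally show ?thesis using i by simp
qed



lemma pow_split_bound:
  fixes a b :: real
  shows "\<bar>a + b\<bar>^n \<le> 2^n * (\<bar>a\<bar>^n + \<bar>b\<bar>^n)"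
proof -
  have "\<bar>a + b\<bar> \<le> 2 * max \<bar>a\<bar> \<bar>b\<bar>" using abs_triangle_ineq[of a b] by (auto simp: max_def)
  then have "\<bar>a + b\<bar>^n \<le> (2 * max \<bar>a\<bar> \<bar>b\<bar>)^n" by (rule power_mono) simp
  also have "\<dots> = 2^n * (max \<bar>a\<bar> \<bar>b\<bar>)^n" by (simp add: power_mult_distrib)
  also have "(max \<bar>a\<bar> \<bar>b\<bar>)^n \<le> \<bar>a\<bar>^n + \<bar>b\<bar>^n" by (simp add: max_def)
  finally show ?thesis by simp
qed

lemma power_div_fact_zero: "(\<lambda>n. (x::real)^n / fact n) \<longlonglongrightarrow> 0"
proof -
  have "summable (\<lambda>n. inverse (fact n) * x^n)" by (rule summable_exp)
  then have "(\<lambda>n. inverse (fact n) * x^n) \<longlonglongrightarrow> 0" by (rule summable_LIMSEQ_zero)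
  then show ?thesis by (simp add: field_simps)
qed

lemma GMom_even_nonneg:
  assumes "v \<ge> 0" shows "GMom (2*K) m v \<ge> 0"
proof -
  have "(\<integral>x. x^(2*K) \<partial>Gm m v) \<ge> 0" by (intro integral_nonneg_AE) (simp add: power_mult)
  then show ?thesis using Gm_moments[OF assms, where n="2*K" and m=m] by simp
qed

lemma GMom_even_le:
  assumes v: "v \<ge> 0"
  shows "GMom (2*K) m v \<le> 2^(2*K) * (m^(2*K) + v^K * (fact (2*K) / (2^K * fact K)))"
proof (cases "v = 0")
  case True
  have "1 * m^(2*K) \<le> 2^(2*K) * m^(2*K)"
    by (rule mult_right_mono) (auto simp: power_mult)
  then show ?thesis using True GMom_0v[of "2*K" m] by (auto simp: power_mult intro: order.trans)
next
  case False
  define \<sigma> where "\<sigma> = sqrt v"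
  have s: "\<sigma> > 0" using v False by (simp add: \<sigma>_def)
  have sv: "\<sigma>^2 = v" using v by (simp add: \<sigma>_def)
  have G: "Gm m v = density lborel (normal_density m \<sigma>)" using False by (simp add: Gm_def \<sigma>_def)
  have "GMom (2*K) m v = (\<integral>x. x^(2*K) \<partial>Gm m v)" using Gm_moments[OF v] by simp
  also have "\<dots> = (\<integral>x. normal_density m \<sigma> x * x^(2*K) \<partial>lborel)"
    unfolding G by (subst integral_density) auto
  also have "\<dots> \<le> (\<integral>x. 2^(2*K) * (m^(2*K) * normal_density m \<sigma> x + normal_density m \<sigma> x * (x - m)^(2*K)) \<partial>lborel)"
  proof (rule integral_mono)
    have "integrable (Gm m v) (\<lambda>x. x^(2*K))" using Gm_moments[OF v] by simp
    then show "integrable lborel (\<lambda>x. normal_density m \<sigma> x * x^(2*K))" unfolding G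
      by (subst (asm) integrable_density) auto
    show "integrable lborel (\<lambda>x. 2^(2*K) * (m^(2*K) * normal_density m \<sigma> x + normal_density m \<sigma> x * (x - m)^(2*K)))"
      by (intro integrable_mult_right Bochner_Integration.integrable_add integrable_normal_moment)
         (auto simp: s integrable_normal_density[OF s])
    fix x
    have "x^(2*K) = \<bar>(x - m) + m\<bar>^(2*K)" by (simp add: power_even_abs)
    also have "\<dots> \<le> 2^(2*K) * (\<bar>x - m\<bar>^(2*K) + \<bar>m\<bar>^(2*K))" by (rule pow_split_bound)
    also have "\<dots> = 2^(2*K) * ((x - m)^(2*K) + m^(2*K))" by (simp add: power_even_abs)
    finally have "normal_density m \<sigma> x * x^(2*K) \<le> normal_density m \<sigma> x * (2^(2*K) * ((x - m)^(2*K) + m^(2*K)))"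
      by (intro mult_left_mono) auto
    then show "normal_density m \<sigma> x * x^(2*K) \<le> 2^(2*K) * (m^(2*K) * normal_density m \<sigma> x + normal_density m \<sigma> x * (x - m)^(2*K))"
      by (simp add: algebra_simps)
  qed
  also have "\<dots> = 2^(2*K) * (m^(2*K) * (\<integral>x. normal_density m \<sigma> x \<partial>lborel) + (\<integral>x. normal_density m \<sigma> x * (x - m)^(2*K) \<partial>lborel))"
    by (simp add: Bochner_Integration.integral_add integrable_normal_moment[OF s] integrable_normal_density[OF s])
  also have "\<dots> = 2^(2*K) * (m^(2*K) * 1 + v^K * (fact (2*K) / (2^K * fact K)))"
    using integral_normal_moment_even[OF s, of m K] sv integral_normal_density[OF s, of m]
    by (simp add: power_divide field_simps)
  finally show ?thesis by simp
qed

lemma GMom_even_tendsto: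
  assumes v: "v \<ge> 0"
  shows "(\<lambda>K. \<bar>t\<bar>^(2*K) / fact (2*K) * GMom (2*K) m v) \<longlonglongrightarrow> 0"
proof (rule Lim_null_comparison)
  let ?g = "\<lambda>K. (2*\<bar>t\<bar>*\<bar>m\<bar>)^(2*K) / fact (2*K) + (2*t^2* v)^K / fact K"
  show "\<forall>\<^sub>F K in sequentially. norm (\<bar>t\<bar>^(2*K) / fact (2*K) * GMom (2*K) m v) \<le> ?g K"
  proof (intro always_eventually allI)
    fix K
    have nn: "GMom (2*K) m v \<ge> 0" by (rule GMom_even_nonneg[OF v])
    have "norm (\<bar>t\<bar>^(2*K) / fact (2*K) * GMom (2*K) m v) = \<bar>t\<bar>^(2*K) / fact (2*K) * GMom (2*K) m v"
      using nn by simp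
    also have "\<dots> \<le> \<bar>t\<bar>^(2*K) / fact (2*K) * (2^(2*K) * (m^(2*K) + v^K * (fact (2*K) / (2^K * fact K))))"
      by (intro mult_left_mono GMom_even_le v) auto
    also have "\<dots> = ?g K"
    proof -
      have e1: "\<bar>t\<bar>^(2*K) * 2^(2*K) * m^(2*K) = (2*\<bar>t\<bar>*\<bar>m\<bar>)^(2*K)"
        by (simp add: power_mult_distrib power_even_abs)
      have e2: "\<bar>t\<bar>^(2*K) * 2^(2*K) * v^K / 2^K = (2*t^2* v)^K"
      proof -
        have "\<bar>t\<bar>^(2*K) = (t^2)^K" by (simp add: power_mult)
        moreover have "(2::real)^(2*K) = 2^K * 2^K" by (simp add: mult_2 power_add)
        ultimately show ?thesis by (simp add: power_mult_distrib)
      qed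
      have "\<bar>t\<bar>^(2*K) / fact (2*K) * (2^(2*K) * (m^(2*K) + v^K * (fact (2*K) / (2^K * fact K))))
         = (\<bar>t\<bar>^(2*K) * 2^(2*K) * m^(2*K)) / fact (2*K) + (\<bar>t\<bar>^(2*K) * 2^(2*K) * v^K / 2^K) / fact K"
        by (simp add: field_simps)
      then show ?thesis unfolding e1 e2 .
    qed
    finally show "norm (\<bar>t\<bar>^(2*K) / fact (2*K) * GMom (2*K) m v) \<le> ?g K" .
  qed
  have "(\<lambda>K. (2*\<bar>t\<bar>*\<bar>m\<bar>)^(2*K) / fact (2*K)) \<longlonglongrightarrow> 0"
    using LIMSEQ_subseq_LIMSEQ[OF power_div_fact_zero[of "2*\<bar>t\<bar>*\<bar>m\<bar>"], of "\<lambda>K. 2*K"]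
    by (simp add: strict_mono_def o_def)
  then show "?g \<longlonglongrightarrow> 0"
    using tendsto_add[OF _ power_div_fact_zero[of "2*t^2* v"]] by simp
qed

lemma moments_determine:
  assumes mu: "real_distribution \<mu>" and v: "v \<ge> 0"
    and int: "\<And>n. integrable \<mu> (\<lambda>x. x^n)" and mom: "\<And>n. (\<integral>x. x^n \<partial>\<mu>) = GMom n m v"
  shows "\<mu> = Gm m v"
proof -
  interpret \<mu>: real_distribution \<mu> by (rule mu)
  interpret G: real_distribution "Gm m v" by (rule real_distribution_Gm[OF v])
  have "char \<mu> t = char (Gm m v) t" for t
  proof -
    define S where "S K = (\<Sum>k \<le> 2*K. ((\<i> * t)^k / fact k) * complex_of_real (GMom k m v))" for K
    define B where "B K = 2*\<bar>t\<bar>^(2*K) / fact (2*K) * GMom (2*K) m v" for K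
    have 1: "cmod (char \<mu> t - S K) \<le> B K" for K
    proof -
      have "(\<integral>x. \<bar>x\<bar>^(2*K) \<partial>\<mu>) = GMom (2*K) m v" using mom[of "2*K"] by (simp add: power_even_abs)
      then show ?thesis using \<mu>.char_approx1[of "2*K" t] int mom by (simp add: S_def B_def)
    qed
    have 2: "cmod (char (Gm m v) t - S K) \<le> B K" for K
    proof -
      have "(\<integral>x. \<bar>x\<bar>^(2*K) \<partial>Gm m v) = GMom (2*K) m v" using Gm_moments[OF v, where n="2*K" and m=m] by (simp add: power_even_abs)
      then show ?thesis using G.char_approx1[of "2*K" t] Gm_moments[OF v] by (simp add: S_def B_def)
    qed
    have 3: "cmod (char \<mu> t - char (Gm m v) t) \<le> 2 * B K" for K
    proof -
      have "cmod (char \<mu> t - char (Gm m v) t) \<le> cmod (char \<mu> t - S K) + cmod (char (Gm m v) t - S K)"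
        by (rule order.trans[OF _ norm_triangle_ineq4]) simp
      then show ?thesis using 1[of K] 2[of K] by simp
    qed
    have "(\<lambda>K. 2 * B K) \<longlonglongrightarrow> 0"
      using tendsto_mult_right_zero[OF GMom_even_tendsto[OF v, of t m], of 4] by (simp add: B_def)
    then have "cmod (char \<mu> t - char (Gm m v) t) \<le> 0"
      by (rule LIMSEQ_le_const) (use 3 in blast)
    then show ?thesis by simp
  qed
  then show ?thesis by (intro Levy_uniqueness mu real_distribution_Gm v) auto
qed



lemma poly_eq_on_nonneg:
  fixes p q :: "real poly"
  assumes "\<And>s. s \<ge> 0 \<Longrightarrow> poly p s = poly q s"
  shows "poly p s = poly q s"
proof -
  have "p - q = 0"
  proof (rule ccontr)
    assume "p - q \<noteq> 0"
    then have "finite {x. poly (p - q) x = 0}" by (rule poly_roots_finite)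
    moreover have "{0..1::real} \<subseteq> {x. poly (p - q) x = 0}" using assms by auto
    ultimately have "finite {0..1::real}" by (rule finite_subset[rotated])
    then show False using infinite_Icc[of "0::real" 1] by simp
  qed
  then show ?thesis by simp
qed

lemma mixed_bound:
  fixes x y :: real
  shows "\<bar>x^i * y^k\<bar> \<le> \<bar>x\<bar>^(i+k) + \<bar>y\<bar>^(i+k)"
proof -
  define c where "c = max \<bar>x\<bar> \<bar>y\<bar>"
  have "\<bar>x^i * y^k\<bar> = \<bar>x\<bar>^i * \<bar>y\<bar>^k" by (simp add: abs_mult power_abs)
  also have "\<dots> \<le> c^i * c^k" unfolding c_def
    by (intro mult_mono power_mono) auto
  also have "\<dots> = c^(i+k)" by (simp add: power_add)
  also have "\<dots> \<le> \<bar>x\<bar>^(i+k) + \<bar>y\<bar>^(i+k)" unfolding c_def by (simp add: max_def)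
  finally show ?thesis .
qed

context prob_space
begin

lemma rv_gauss_moments:
  assumes Y: "Y \<in> borel_measurable M" and g: "gaussian_measure (distr M borel Y)"
  shows "(\<forall>n. integrable M (\<lambda>\<omega>. Y \<omega> ^ n)) \<and>
    (\<forall>n. expectation (\<lambda>\<omega>. Y \<omega> ^ n) = GMom n (expectation Y) (expectation (\<lambda>\<omega>. Y \<omega>^2) - (expectation Y)^2))"
proof -
  obtain m v where v: "v \<ge> 0" and D: "distr M borel Y = Gm m v" using gaussian_Gm[OF g] by blast
  have i: "integrable M (\<lambda>\<omega>. Y \<omega> ^ n)" for n
    using Gm_moments[OF v, where n=n and m=m] D integrable_distr_eq[OF Y, of "\<lambda>x. x^n"] by simp
  have e: "expectation (\<lambda>\<omega>. Y \<omega> ^ n) = GMom n m v" for n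
    using Gm_moments[OF v, where n=n and m=m] D integral_distr[OF Y, of "\<lambda>x. x^n"] by simp
  have "expectation Y = m" using e[of 1] GMom_1 by simp
  moreover have "expectation (\<lambda>\<omega>. Y \<omega>^2) = m^2 + v" using e[of 2] GMom_2 by simp
  ultimately show ?thesis using i e by simp
qed

lemma lin_comb_gaussian:
  fixes X0 X1 :: "'a \<Rightarrow> real"
  assumes X0: "X0 \<in> borel_measurable M" and X1: "X1 \<in> borel_measurable M"
    and G: "\<And>t. t \<in> {0..1} \<Longrightarrow> gaussian_measure (distr M borel (\<lambda>\<omega>. (1 - t) * X0 \<omega> + t * X1 \<omega>))"
  shows "gaussian_measure (distr M borel (\<lambda>\<omega>. a * X0 \<omega> + b * X1 \<omega>))"
proof -
  have G0: "gaussian_measure (distr M borel X0)" using G[of 0] by simp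
  have G1: "gaussian_measure (distr M borel X1)" using G[of 1] by simp
  have i0: "integrable M (\<lambda>\<omega>. X0 \<omega> ^ n)" for n using rv_gauss_moments[OF X0 G0] by blast
  have i1: "integrable M (\<lambda>\<omega>. X1 \<omega> ^ n)" for n using rv_gauss_moments[OF X1 G1] by blast
  have imix: "integrable M (\<lambda>\<omega>. X0 \<omega> ^ i * X1 \<omega> ^ k)" for i k
  proof (rule Bochner_Integration.integrable_bound)
    show "integrable M (\<lambda>\<omega>. \<bar>X0 \<omega>\<bar>^(i+k) + \<bar>X1 \<omega>\<bar>^(i+k))"
      unfolding power_abs[symmetric]
      by (intro Bochner_Integration.integrable_add integrable_abs i0 i1)
    show "(\<lambda>\<omega>. X0 \<omega> ^ i * X1 \<omega> ^ k) \<in> borel_measurable M" using X0 X1 by measurable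
    show "AE \<omega> in M. norm (X0 \<omega> ^ i * X1 \<omega> ^ k) \<le> norm (\<bar>X0 \<omega>\<bar>^(i+k) + \<bar>X1 \<omega>\<bar>^(i+k))"
      using mixed_bound by (auto intro!: AE_I2 order.trans[OF _ abs_ge_self])
  qed
  define E where "E i k = expectation (\<lambda>\<omega>. X0 \<omega> ^ i * X1 \<omega> ^ k)" for i k
  have expand: "(\<lambda>\<omega>. (a * X0 \<omega> + b * X1 \<omega>)^n) =
      (\<lambda>\<omega>. \<Sum>k\<le>n. real (n choose k) * a^k * b^(n-k) * (X0 \<omega> ^ k * X1 \<omega> ^ (n-k)))" for a b n
  proof
    fix \<omega>
    show "(a * X0 \<omega> + b * X1 \<omega>)^n = (\<Sum>k\<le>n. real (n choose k) * a^k * b^(n-k) * (X0 \<omega> ^ k * X1 \<omega> ^ (n-k)))"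
      by (subst binomial_ring) (simp add: power_mult_distrib ac_simps)
  qed
  have ilin: "integrable M (\<lambda>\<omega>. (a * X0 \<omega> + b * X1 \<omega>)^n)" for a b n
    unfolding expand by (intro Bochner_Integration.integrable_sum integrable_mult_right imix)
  have elin: "expectation (\<lambda>\<omega>. (a * X0 \<omega> + b * X1 \<omega>)^n) =
      (\<Sum>k\<le>n. real (n choose k) * a^k * b^(n-k) * E k (n-k))" for a b n
    unfolding expand E_def
    by (subst Bochner_Integration.integral_sum) (auto intro!: integrable_mult_right imix)
  define m0 where "m0 = E 1 0"
  define m1 where "m1 = E 0 1"
  define Q where "Q a b = a^2 * (E 2 0 - m0^2) + 2 * a * b * (E 1 1 - m0 * m1) + b^2 * (E 0 2 - m1^2)" for a b
  define P where "P n a b \<longleftrightarrow> expectation (\<lambda>\<omega>. (a * X0 \<omega> + b * X1 \<omega>)^n) = GMom n (a * m0 + b * m1) (Q a b)" for n a b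
  have mean: "expectation (\<lambda>\<omega>. a * X0 \<omega> + b * X1 \<omega>) = a * m0 + b * m1" for a b
    using elin[of a b 1] by (simp add: m0_def m1_def)
  have sq: "expectation (\<lambda>\<omega>. (a * X0 \<omega> + b * X1 \<omega>)^2) - (a * m0 + b * m1)^2 = Q a b" for a b
    using elin[of a b 2] by (simp add: numeral_2_eq_2 atMost_Suc Q_def power2_eq_square algebra_simps)
  have P01: "P n (1 - t) t" if t: "t \<in> {0..1}" for n t
  proof -
    have Ym: "(\<lambda>\<omega>. (1 - t) * X0 \<omega> + t * X1 \<omega>) \<in> borel_measurable M" using X0 X1 by measurable
    from rv_gauss_moments[OF Ym G[OF t]] mean[of "1 - t" t] sq[of "1 - t" t]
    show ?thesis unfolding P_def by simp
  qed
  have Pscale: "P n (c * a) (c * b)" if "P n a b" for n a b c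
  proof -
    have "expectation (\<lambda>\<omega>. ((c * a) * X0 \<omega> + (c * b) * X1 \<omega>)^n) = c^n * expectation (\<lambda>\<omega>. (a * X0 \<omega> + b * X1 \<omega>)^n)"
    proof -
      have "((c * a) * X0 \<omega> + (c * b) * X1 \<omega>)^n = c^n * (a * X0 \<omega> + b * X1 \<omega>)^n" for \<omega>
      proof -
        have "(c * a) * X0 \<omega> + (c * b) * X1 \<omega> = c * (a * X0 \<omega> + b * X1 \<omega>)" by algebra
        then show ?thesis by (simp only: power_mult_distrib)
      qed
      then show ?thesis by simp
    qed
    moreover have "(c * a) * m0 + (c * b) * m1 = c * (a * m0 + b * m1)" by (simp add: algebra_simps)
    moreover have "Q (c * a) (c * b) = c^2 * Q a b" by (simp add: Q_def algebra_simps power2_eq_square)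
    ultimately show ?thesis using that GMom_scale[of n c "a * m0 + b * m1" "Q a b"] unfolding P_def by simp
  qed
  have Ppos: "P n 1 s" if "s \<ge> 0" for n s
  proof -
    have "s / (1 + s) \<in> {0..1}" using that by auto
    from Pscale[OF P01[OF this, of n], of "1 + s"]
    have "P n ((1 + s) * (1 - s / (1 + s))) ((1 + s) * (s / (1 + s)))" .
    moreover have "(1 + s) * (1 - s / (1 + s)) = 1" "(1 + s) * (s / (1 + s)) = s" using that by (auto simp: field_simps)
    ultimately show ?thesis by simp
  qed
  have Pall: "P n 1 s" for n s
  proof -
    define p where "p = (\<Sum>k\<le>n. smult (real (n choose k) * E k (n-k)) ([:0, 1:]^(n-k)))"
    define q where "q = (\<Sum>j\<le>n. smult (real (n choose j) * gmu j) ([:m0, m1:]^(n-j) * [:E 2 0 - m0^2, 2 * (E 1 1 - m0 * m1), E 0 2 - m1^2:]^(j div 2)))"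
    have pe: "poly p s = expectation (\<lambda>\<omega>. (1 * X0 \<omega> + s * X1 \<omega>)^n)" for s
      unfolding elin p_def by (simp add: poly_sum ac_simps)
    have qe: "poly q s = GMom n (1 * m0 + s * m1) (Q 1 s)" for s
      unfolding q_def GMom_def Q_def
      by (simp add: poly_sum algebra_simps power2_eq_square)
    have "poly p s = poly q s"
      by (rule poly_eq_on_nonneg) (use Ppos in \<open>simp add: pe qe P_def\<close>)
    then show ?thesis unfolding P_def pe qe by simp
  qed
  have Pab: "P n a b" for n
  proof (cases "a = 0")
    case True
    from Pscale[OF P01[of 1 n], of b] show ?thesis using True by simp
  next
    case False
    from Pscale[OF Pall[of n "b / a"], of a] show ?thesis using False by simp
  qed
  define Y where "Y \<omega> = a * X0 \<omega> + b * X1 \<omega>" for \<omega>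
  have Ym: "Y \<in> borel_measurable M" unfolding Y_def using X0 X1 by measurable
  define mm where "mm = a * m0 + b * m1"
  have mom: "expectation (\<lambda>\<omega>. Y \<omega> ^ n) = GMom n mm (Q a b)" for n
    using Pab[of n] unfolding P_def Y_def mm_def .
  have vnn: "Q a b \<ge> 0"
  proof -
    have "0 \<le> expectation (\<lambda>\<omega>. (Y \<omega> - mm)^2)" by (intro integral_nonneg_AE) auto
    also have "expectation (\<lambda>\<omega>. (Y \<omega> - mm)^2) = expectation (\<lambda>\<omega>. Y \<omega>^2 - 2 * mm * Y \<omega> + mm^2)"
      by (rule arg_cong[where f=expectation]) (simp add: fun_eq_iff power2_diff)
    also have "\<dots> = expectation (\<lambda>\<omega>. Y \<omega>^2) - 2 * mm * expectation Y + mm^2"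
      using ilin[of a b 2] ilin[of a b 1] unfolding Y_def
      by (simp add: Bochner_Integration.integral_diff Bochner_Integration.integral_add prob_space)
    also have "expectation Y = mm" using mom[of 1] GMom_1 by simp
    also have "expectation (\<lambda>\<omega>. Y \<omega>^2) = mm^2 + Q a b" using mom[of 2] GMom_2 by simp
    finally show ?thesis by (simp add: power2_eq_square)
  qed
  have "distr M borel Y = Gm mm (Q a b)"
  proof (rule moments_determine[OF _ vnn])
    show "real_distribution (distr M borel Y)"
      unfolding real_distribution_def real_distribution_axioms_def
      using Ym by (auto intro: prob_space_distr)
    show "integrable (distr M borel Y) (\<lambda>x. x^n)" for n
      using integrable_distr_eq[OF Ym, of "\<lambda>x. x^n"] ilin[of a b n] unfolding Y_def by simp
    show "(\<integral>x. x^n \<partial>distr M borel Y) = GMom n mm (Q a b)" for n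
      using integral_distr[OF Ym, of "\<lambda>x. x^n"] mom[of n] by simp
  qed
  then show ?thesis using Gm_gaussian[OF vnn] unfolding Y_def by simp
qed

end



lemma deriv_zero_ae_const:
  fixes g g' :: "real \<Rightarrow> real"
  assumes d: "\<And>t. t \<in> {0..1} \<Longrightarrow> (g has_real_derivative g' t) (at t within {0..1})"
    and N: "negligible N" and z: "\<And>t. t \<in> {0..1} - N \<Longrightarrow> g' t = 0"
    and t: "t \<in> {0..1}"
  shows "g t = g 0"
proof -
  have I1: "(g' has_integral (g t - g 0)) {0..t}"
  proof (rule fundamental_theorem_of_calculus)
    show "0 \<le> t" using t by simp
    fix x assume x: "x \<in> {0..t}"
    then have "x \<in> {0..1}" using t by auto
    from d[OF this] have "(g has_vector_derivative g' x) (at x within {0..1})"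
      by (simp add: has_real_derivative_iff_has_vector_derivative)
    then show "(g has_vector_derivative g' x) (at x within {0..t})"
      by (rule has_vector_derivative_within_subset) (use t in auto)
  qed
  have I2: "(g' has_integral 0) {0..t}"
  proof (rule has_integral_spike[OF N])
    show "((\<lambda>_. 0::real) has_integral 0) {0..t}" by simp
    fix x assume "x \<in> {0..t} - N"
    then show "g' x = 0" using z t by auto
  qed
  from has_integral_unique[OF I1 I2] show ?thesis by simp
qed

lemma lin_from_dd:
  fixes f f' f'' :: "real \<Rightarrow> real"
  assumes d1: "\<And>t. t \<in> {0..1} \<Longrightarrow> (f has_real_derivative f' t) (at t within {0..1})"
    and d2: "\<And>t. t \<in> {0..1} \<Longrightarrow> (f' has_real_derivative f'' t) (at t within {0..1})"
    and N: "negligible N" and z: "\<And>t. t \<in> {0..1} - N \<Longrightarrow> f'' t = 0"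
    and t: "t \<in> {0..1}"
  shows "f t = (1 - t) * f 0 + t * f 1"
proof -
  have c: "f' s = f' 0" if "s \<in> {0..1}" for s
    by (rule deriv_zero_ae_const[OF d2 N z that])
  define g where "g s = f s - s * f' 0" for s
  have dg: "(g has_real_derivative 0) (at s within {0..1})" if "s \<in> {0..1}" for s
  proof -
    have "(g has_real_derivative f' s - 1 * f' 0) (at s within {0..1})"
      unfolding g_def by (rule DERIV_diff[OF d1[OF that] DERIV_cmult_right[OF DERIV_ident]])
    then show ?thesis using c[OF that] by simp
  qed
  have "g s = g 0" if "s \<in> {0..1}" for s
    by (rule deriv_zero_ae_const[OF dg negligible_empty _ that]) auto
  from this[OF t] this[of 1] show ?thesis by (simp add: g_def algebra_simps)
qed

definition clamp :: "real \<Rightarrow> real" where "clamp t = max 0 (min 1 t)"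

lemma clamp_in[simp]: "clamp t \<in> {0..1}" by (simp add: clamp_def)
lemma clamp_ge0[simp]: "0 \<le> clamp t" by (simp add: clamp_def)
lemma clamp_le1[simp]: "clamp t \<le> 1" by (simp add: clamp_def)
lemma clamp_id[simp]: "t \<in> {0..1} \<Longrightarrow> clamp t = t" by (simp add: clamp_def)
lemma clamp_meas[measurable]: "clamp \<in> borel_measurable borel"
  unfolding clamp_def by measurable
lemma clamp_tendsto: "(f \<longlongrightarrow> l) F \<Longrightarrow> ((\<lambda>x. clamp (f x)) \<longlongrightarrow> clamp l) F"
  unfolding clamp_def by (intro tendsto_intros)

lemma joint_meas_cont:
  fixes F :: "real \<Rightarrow> 'a \<Rightarrow> real"
  assumes meas: "\<And>t. t \<in> {0..1} \<Longrightarrow> F t \<in> borel_measurable M"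
    and cont: "\<And>\<omega>. \<omega> \<in> space M \<Longrightarrow> continuous_on {0..1} (\<lambda>s. F s \<omega>)"
  shows "(\<lambda>p. F (clamp (fst p)) (snd p)) \<in> borel_measurable (lborel \<Otimes>\<^sub>M M)"
proof (rule borel_measurable_LIMSEQ_real)
  define u where "u n p = F (clamp (real_of_int \<lceil>real (Suc n) * fst p\<rceil> / real (Suc n))) (snd p)" for n p
  show "u n \<in> borel_measurable (lborel \<Otimes>\<^sub>M M)" for n
  proof -
    have "(\<lambda>p. (\<lambda>i p. F (clamp (real_of_int i / real (Suc n))) (snd p)) (\<lceil>real (Suc n) * fst p\<rceil>) p)
          \<in> borel_measurable (lborel \<Otimes>\<^sub>M M)"
    proof (rule measurable_compose_countable[where f="\<lambda>i p. F (clamp (real_of_int i / real (Suc n))) (snd p)" and g="\<lambda>p. \<lceil>real (Suc n) * fst p\<rceil>"])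
      fix i :: int
      show "(\<lambda>p. F (clamp (real_of_int i / real (Suc n))) (snd p)) \<in> borel_measurable (lborel \<Otimes>\<^sub>M M)"
        using measurable_compose[OF measurable_snd meas[OF clamp_in[of "real_of_int i / real (Suc n)"]], of lborel]
        by simp
    next
      show "(\<lambda>p. \<lceil>real (Suc n) * fst p\<rceil>) \<in> measurable (lborel \<Otimes>\<^sub>M M) (count_space UNIV)"
        by (rule measurable_compose[OF _ measurable_real_ceiling]) measurable
    qed
    then show ?thesis unfolding u_def by simp
  qed
  fix p :: "real \<times> 'a" assume p: "p \<in> space (lborel \<Otimes>\<^sub>M M)"
  then have \<omega>: "snd p \<in> space M" by (auto simp: space_pair_measure)
  define t where "t = fst p"
  have lim: "(\<lambda>n. real_of_int \<lceil>real (Suc n) * t\<rceil> / real (Suc n)) \<longlonglongrightarrow> t"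
  proof (rule tendsto_sandwich[where f="\<lambda>n. t" and h="\<lambda>n. t + inverse (real (Suc n))"])
    show "\<forall>\<^sub>F n in sequentially. t \<le> real_of_int \<lceil>real (Suc n) * t\<rceil> / real (Suc n)"
    proof (intro always_eventually allI)
      fix n
      have "real (Suc n) * t \<le> real_of_int \<lceil>real (Suc n) * t\<rceil>" by (rule le_of_int_ceiling)
      then show "t \<le> real_of_int \<lceil>real (Suc n) * t\<rceil> / real (Suc n)"
        by (simp add: field_simps del: of_nat_Suc)
    qed
    show "\<forall>\<^sub>F n in sequentially. real_of_int \<lceil>real (Suc n) * t\<rceil> / real (Suc n) \<le> t + inverse (real (Suc n))"
    proof (intro always_eventually allI)
      fix n
      have "real_of_int \<lceil>real (Suc n) * t\<rceil> \<le> real (Suc n) * t + 1"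
        using ceiling_correct[of "real (Suc n) * t"] by linarith
      then show "real_of_int \<lceil>real (Suc n) * t\<rceil> / real (Suc n) \<le> t + inverse (real (Suc n))"
        by (simp add: field_simps del: of_nat_Suc)
    qed
    show "(\<lambda>n. t + inverse (real (Suc n))) \<longlonglongrightarrow> t"
      using tendsto_add[OF tendsto_const LIMSEQ_inverse_real_of_nat, of t] by simp
  qed simp
  have "(\<lambda>n. F (clamp (real_of_int \<lceil>real (Suc n) * t\<rceil> / real (Suc n))) (snd p)) \<longlonglongrightarrow> F (clamp t) (snd p)"
    by (rule continuous_on_tendsto_compose[OF cont[OF \<omega>] clamp_tendsto[OF lim]]) auto
  then show "(\<lambda>n. u n p) \<longlonglongrightarrow> F (clamp (fst p)) (snd p)" unfolding u_def t_def .
qed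

lemma joint_meas_deriv:
  fixes F G :: "real \<Rightarrow> 'a \<Rightarrow> real"
  assumes joint: "(\<lambda>p. F (clamp (fst p)) (snd p)) \<in> borel_measurable (lborel \<Otimes>\<^sub>M M)"
    and der: "\<And>\<omega> t. \<omega> \<in> space M \<Longrightarrow> t \<in> {0..1} \<Longrightarrow>
           ((\<lambda>s. F s \<omega>) has_real_derivative G t \<omega>) (at t within {0..1})"
  shows "(\<lambda>p. G (clamp (fst p)) (snd p)) \<in> borel_measurable (lborel \<Otimes>\<^sub>M M)"
proof (rule borel_measurable_LIMSEQ_real)
  define h where "h n u = (if u \<le> 1/2 then u + 1 / real (Suc (Suc n)) else u - 1 / real (Suc (Suc n)))" for n u
  have h_in: "h n u \<in> {0..1}" if "u \<in> {0..1}" for n u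
  proof -
    have "\<forall>d::real. 0 < d \<and> d \<le> 1/2 \<longrightarrow> (if u \<le> 1/2 then u + d else u - d) \<in> {0..1}"
      using that by auto
    moreover have "1 / real (Suc (Suc n)) \<le> 1/2" by (simp add: field_simps)
    moreover have "0 < 1 / real (Suc (Suc n))" by simp
    ultimately show ?thesis unfolding h_def by blast
  qed
  have h_ne: "h n u \<noteq> u" for n u unfolding h_def by auto
  have h_meas: "h n \<in> borel_measurable borel" for n unfolding h_def by measurable
  define v where "v n (p :: real \<times> 'a) = (F (clamp (h n (clamp (fst p)))) (snd p) - F (clamp (fst p)) (snd p)) / (h n (clamp (fst p)) - clamp (fst p))" for n p
  show "v n \<in> borel_measurable (lborel \<Otimes>\<^sub>M M)" for n
  proof -
    have "(\<lambda>p. (h n (clamp (fst p)), snd p)) \<in> measurable (lborel \<Otimes>\<^sub>M M) (lborel \<Otimes>\<^sub>M M)"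
      using h_meas by measurable
    from measurable_compose[OF this joint]
    have A: "(\<lambda>p. F (clamp (h n (clamp (fst p)))) (snd p)) \<in> borel_measurable (lborel \<Otimes>\<^sub>M M)" by simp
    have B: "(\<lambda>p. h n (clamp (fst p))) \<in> borel_measurable (lborel \<Otimes>\<^sub>M M)" using h_meas by measurable
    show ?thesis unfolding v_def by (intro borel_measurable_divide borel_measurable_diff A B joint) measurable
  qed
  fix p :: "real \<times> 'a" assume p: "p \<in> space (lborel \<Otimes>\<^sub>M M)"
  then have \<omega>: "snd p \<in> space M" by (auto simp: space_pair_measure)
  define u where "u = clamp (fst p)"
  have u: "u \<in> {0..1}" by (simp add: u_def)
  have D: "((\<lambda>s. (F s (snd p) - F u (snd p)) / (s - u)) \<longlongrightarrow> G u (snd p)) (at u within {0..1})"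
    using der[OF \<omega> u] by (simp add: has_field_derivative_iff)
  have hl: "(\<lambda>n. h n u) \<longlonglongrightarrow> u"
  proof (cases "u \<le> 1/2")
    case True
    then have "(\<lambda>n. h n u) = (\<lambda>n. u + inverse (real (Suc (Suc n))))" by (auto simp: h_def fun_eq_iff field_simps)
    moreover have "(\<lambda>n. u + inverse (real (Suc (Suc n)))) \<longlonglongrightarrow> u + 0"
      by (intro tendsto_add tendsto_const LIMSEQ_Suc[OF LIMSEQ_inverse_real_of_nat])
    ultimately show ?thesis by simp
  next
    case False
    then have "(\<lambda>n. h n u) = (\<lambda>n. u - inverse (real (Suc (Suc n))))" by (auto simp: h_def fun_eq_iff field_simps)
    moreover have "(\<lambda>n. u - inverse (real (Suc (Suc n)))) \<longlonglongrightarrow> u - 0"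
      by (intro tendsto_diff tendsto_const LIMSEQ_Suc[OF LIMSEQ_inverse_real_of_nat])
    ultimately show ?thesis by simp
  qed
  have "filterlim (\<lambda>n. h n u) (at u within {0..1}) sequentially"
    unfolding filterlim_at using hl h_in[OF u] h_ne by auto
  from filterlim_compose[OF D this]
  have "(\<lambda>n. (F (h n u) (snd p) - F u (snd p)) / (h n u - u)) \<longlonglongrightarrow> G u (snd p)" .
  moreover have "v n p = (F (h n u) (snd p) - F u (snd p)) / (h n u - u)" for n
    unfolding v_def u_def[symmetric] using h_in[OF u] by simp
  ultimately show "(\<lambda>n. v n p) \<longlonglongrightarrow> G (clamp (fst p)) (snd p)" unfolding u_def by simp
qed



theorem lemma1:
  fixes M :: "'a measure"
    and X Xd Xdd :: "real \<Rightarrow> 'a \<Rightarrow> real"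
    and \<mu>0 \<mu>1 :: "real measure"
  assumes "prob_space M"
    and "gaussian_measure \<mu>0" and "gaussian_measure \<mu>1"
    and "\<And>t. t \<in> {0..1} \<Longrightarrow> X t \<in> borel_measurable M"
    and "\<And>\<omega> t. \<omega> \<in> space M \<Longrightarrow> t \<in> {0..1} \<Longrightarrow>
           ((\<lambda>s. X s \<omega>) has_real_derivative Xd t \<omega>) (at t within {0..1})"
    and "\<And>\<omega> t. \<omega> \<in> space M \<Longrightarrow> t \<in> {0..1} \<Longrightarrow>
           ((\<lambda>s. Xd s \<omega>) has_real_derivative Xdd t \<omega>) (at t within {0..1})"
    and "distr M borel (X 0) = \<mu>0"
    and "distr M borel (X 1) = \<mu>1"
    and "\<And>t. t \<in> {0..1} \<Longrightarrow> gaussian_measure (distr M borel (X t))"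
    and "(\<integral>\<^sup>+ t. indicator {0..1} t * (\<integral>\<^sup>+ \<omega>. ennreal ((Xdd t \<omega>)\<^sup>2) \<partial>M) \<partial>lborel) = 0"
  shows "jointly_gaussian M (X 0) (X 1)"
proof -
  interpret prob_space M by (rule assms(1))
  interpret P: pair_sigma_finite lborel M ..
  note d1 = assms(5) and d2 = assms(6)
  have contX: "continuous_on {0..1} (\<lambda>s. X s \<omega>)" if "\<omega> \<in> space M" for \<omega>
    by (rule DERIV_continuous_on) (rule d1[OF that])
  have JX: "(\<lambda>p. X (clamp (fst p)) (snd p)) \<in> borel_measurable (lborel \<Otimes>\<^sub>M M)"
    by (rule joint_meas_cont[OF assms(4) contX])
  have JXd: "(\<lambda>p. Xd (clamp (fst p)) (snd p)) \<in> borel_measurable (lborel \<Otimes>\<^sub>M M)"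
    by (rule joint_meas_deriv[OF JX d1])
  have JXdd[measurable]: "(\<lambda>p. Xdd (clamp (fst p)) (snd p)) \<in> borel_measurable (lborel \<Otimes>\<^sub>M M)"
    by (rule joint_meas_deriv[OF JXd d2])
  have JXdd'[measurable]: "(\<lambda>p. Xdd (clamp (snd p)) (fst p)) \<in> borel_measurable (M \<Otimes>\<^sub>M lborel)"
    using measurable_compose[OF measurable_Pair[OF measurable_snd measurable_fst] JXdd] by simp
  define H where "H t \<omega> = indicator {0..1::real} t * ennreal ((Xdd (clamp t) \<omega>)\<^sup>2)" for t \<omega>
  have Hm: "case_prod H \<in> borel_measurable (lborel \<Otimes>\<^sub>M M)"
    unfolding H_def by measurable
  have eq: "indicator {0..1} t * (\<integral>\<^sup>+ \<omega>. ennreal ((Xdd t \<omega>)\<^sup>2) \<partial>M) = (\<integral>\<^sup>+ \<omega>. H t \<omega> \<partial>M)" for t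
    by (cases "t \<in> {0..1}") (simp_all add: H_def)
  have "(\<integral>\<^sup>+ \<omega>. (\<integral>\<^sup>+ t. H t \<omega> \<partial>lborel) \<partial>M) = (\<integral>\<^sup>+ t. (\<integral>\<^sup>+ \<omega>. H t \<omega> \<partial>M) \<partial>lborel)"
    by (rule P.Fubini'[OF Hm])
  also have "\<dots> = 0" using assms(10) unfolding eq .
  finally have I0: "(\<integral>\<^sup>+ \<omega>. (\<integral>\<^sup>+ t. H t \<omega> \<partial>lborel) \<partial>M) = 0" .
  have Hm2: "(\<lambda>\<omega>. \<integral>\<^sup>+ t. H t \<omega> \<partial>lborel) \<in> borel_measurable M"
    unfolding H_def by measurable
  have AE0: "AE \<omega> in M. (\<integral>\<^sup>+ t. H t \<omega> \<partial>lborel) = 0"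
    using I0 nn_integral_0_iff_AE[OF Hm2] by simp
  have lin: "AE \<omega> in M. \<forall>t\<in>{0..1}. X t \<omega> = (1 - t) * X 0 \<omega> + t * X 1 \<omega>"
    using AE0
  proof (rule AE_mp[OF _ AE_I2], intro impI ballI)
    fix \<omega> and t :: real assume \<omega>: "\<omega> \<in> space M" and z: "(\<integral>\<^sup>+ t. H t \<omega> \<partial>lborel) = 0" and t: "t \<in> {0..1}"
    have "(\<lambda>t. (t, \<omega>)) \<in> measurable lborel (lborel \<Otimes>\<^sub>M M)" using \<omega> by (rule measurable_Pair2')
    from measurable_compose[OF this Hm] have Htm: "(\<lambda>t. H t \<omega>) \<in> borel_measurable lborel" by simp
    have "AE s in lborel. H s \<omega> = 0" using z nn_integral_0_iff_AE[OF Htm] by simp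
    then obtain N where N: "{s \<in> space lborel. \<not> H s \<omega> = 0} \<subseteq> N" "N \<in> null_sets lborel"
      by (rule AE_E) (blast intro: null_setsI)
    have negN: "negligible N" using N(2) by (simp add: negligible_iff_null_sets null_sets_completionI)
    have zz: "Xdd s \<omega> = 0" if "s \<in> {0..1} - N" for s
    proof -
      have "H s \<omega> = 0" using N(1) that by auto
      then show ?thesis using that by (simp add: H_def)
    qed
    show "X t \<omega> = (1 - t) * X 0 \<omega> + t * X 1 \<omega>"
      by (rule lin_from_dd[OF d1[OF \<omega>] d2[OF \<omega>] negN zz t])
  qed
  have X0: "X 0 \<in> borel_measurable M" and X1: "X 1 \<in> borel_measurable M" using assms(4) by auto
  have G: "gaussian_measure (distr M borel (\<lambda>\<omega>. (1 - t) * X 0 \<omega> + t * X 1 \<omega>))" if t: "t \<in> {0..1}" for t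
  proof -
    have "distr M borel (\<lambda>\<omega>. (1 - t) * X 0 \<omega> + t * X 1 \<omega>) = distr M borel (X t)"
    proof (rule distr_cong_AE)
      show "AE \<omega> in M. (1 - t) * X 0 \<omega> + t * X 1 \<omega> = X t \<omega>"
      proof (rule AE_mp[OF lin], rule AE_I2, intro impI)
        fix \<omega> assume "\<forall>t\<in>{0..1}. X t \<omega> = (1 - t) * X 0 \<omega> + t * X 1 \<omega>"
        from bspec[OF this t] show "(1 - t) * X 0 \<omega> + t * X 1 \<omega> = X t \<omega>" by simp
      qed
      show "(\<lambda>\<omega>. (1 - t) * X 0 \<omega> + t * X 1 \<omega>) \<in> borel_measurable M" using X0 X1 by measurable
      show "X t \<in> borel_measurable M" using assms(4) t .
    qed simp_all
    then show ?thesis using assms(9)[OF t] by simp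
  qed
  show ?thesis unfolding jointly_gaussian_def
    by (intro allI) (rule lin_comb_gaussian[OF X0 X1 G])
qed


end
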